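(* Let $n \ge 3$ and let $x_1, \dots, x_n \in \mathbb{R}$ be pairwise distinct. Let $\mathbb{H} = \{\theta \in \mathbb{C} : \Im\theta > 0\}$, $h(\theta) = \prod_{j=1}^n (x_j - \theta)$, $q(\theta) = \theta - n\,\frac{h(\theta)}{h'(\theta)}$, and $Q(\theta) = q(q(\theta))$ for $\theta \in \mathbb{H}$ (this is a holomorphic map $\mathbb{H} \to \mathbb{H}$). Let $\hat\theta \in \mathbb{H}$ be the maximum likelihood estimate of the sample, i.e. the maximizer over $\mathbb{H}$ of $L(\theta) = \prod_{j=1}^n \frac{\Im\theta}{\pi\left((x_j - \Re\theta)^2 + (\Im\theta)^2\right)}$. Then: (i) the equation $z = Q(z)$ has a unique solution in $\mathbb{H}$, and it equals $\hat\theta$; (ii) this unique solution $\hat\theta$ of $z = Q(z)$ in $\mathbb{H}$ is a fixed point of $Q$; (iii) for every $z \in \mathbb{H}$, $\lim_{m\to\infty} Q^m(z) = \hat\theta$, where $Q^m$ denotes the $m$-fold iterate of $Q$, and this convergence is exponentially fast, i.e. there exist $C > 0$ and $r \in (0,1)$ (depending on $z$ and the sample) with $|Q^m(z) - \hat\theta| \le C r^m$ for all $m$.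
   Context: The Cauchy distribution $C(\theta)$ with $\theta = \mu + i\sigma \in \mathbb{H}$ ($\mu \in \mathbb{R}$, $\sigma>0$) has density $f(x;\theta) = \frac{\sigma}{\pi}\frac{1}{(x-\mu)^2+\sigma^2}$ on $\mathbb{R}$. The likelihood of the sample is $L(\theta) = \prod_{j=1}^n f(x_j;\theta)$; for $n \ge 3$ distinct observations its maximizer over $\mathbb{H}$ exists and is unique, and it is called the maximum likelihood estimate $\hat\theta$. Since the $x_j$ are distinct, all zeros of $h'$ are real, so $q$ is defined on $\mathbb{H}$; $q$ maps $\mathbb{H}$ into the lower half-plane and the lower half-plane into $\mathbb{H}$. *)

theory Defs
  imports "HOL-Analysis.Analysis"
begin

text \<open>Sample x_0, ..., x_(n-1) given as a function xs on indices below n.\<close>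

definition upper_half :: "complex set" where
  "upper_half = {z. Im z > 0}"

definition cauchy_h :: "nat \<Rightarrow> (nat \<Rightarrow> real) \<Rightarrow> complex \<Rightarrow> complex" where
  "cauchy_h n xs \<theta> = (\<Prod>j<n. complex_of_real (xs j) - \<theta>)"

definition cauchy_q :: "nat \<Rightarrow> (nat \<Rightarrow> real) \<Rightarrow> complex \<Rightarrow> complex" where
  "cauchy_q n xs \<theta> = \<theta> - of_nat n * cauchy_h n xs \<theta> / deriv (cauchy_h n xs) \<theta>"

definition cauchy_Q :: "nat \<Rightarrow> (nat \<Rightarrow> real) \<Rightarrow> complex \<Rightarrow> complex" where
  "cauchy_Q n xs \<theta> = cauchy_q n xs (cauchy_q n xs \<theta>)"

definition cauchy_lik :: "nat \<Rightarrow> (nat \<Rightarrow> real) \<Rightarrow> complex \<Rightarrow> real" where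
  "cauchy_lik n xs \<theta> =
     (\<Prod>j<n. Im \<theta> / (pi * ((xs j - Re \<theta>)\<^sup>2 + (Im \<theta>)\<^sup>2)))"

end

theory Submission
  imports Defs "HOL-Complex_Analysis.Complex_Analysis"
begin


lemma prod_deriv_aux:
  fixes c :: "nat \<Rightarrow> complex"
  assumes "finite I" "\<forall>j\<in>I. z \<noteq> c j"
  shows "((\<lambda>z. \<Prod>j\<in>I. c j - z) has_field_derivative
          (\<Prod>j\<in>I. c j - z) * (\<Sum>j\<in>I. 1 / (z - c j))) (at z)"
  using assms
proof (induction I rule: finite_induct)
  case empty
  then show ?case by simp
next
  case (insert i I)
  have d: "((\<lambda>z. (c i - z) * (\<Prod>j\<in>I. c j - z)) has_field_derivative
     (-1) * (\<Prod>j\<in>I. c j - z) + (c i - z) * ((\<Prod>j\<in>I. c j - z) * (\<Sum>j\<in>I. 1 / (z - c j)))) (at z)"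
    using insert by (auto intro!: derivative_eq_intros)
  have ne: "z - c i \<noteq> 0" using insert by auto
  have "(-1) * (\<Prod>j\<in>I. c j - z) + (c i - z) * ((\<Prod>j\<in>I. c j - z) * (\<Sum>j\<in>I. 1 / (z - c j)))
      = (\<Prod>j\<in>insert i I. c j - z) * (\<Sum>j\<in>insert i I. 1 / (z - c j))"
    using insert ne by (simp add: field_simps)
  with d show ?case using insert by simp
qed

lemma real_var_identity:
  fixes a :: "nat \<Rightarrow> real"
  assumes "finite I"
  shows "(\<Sum>i\<in>I. \<Sum>l\<in>I. (a i - a l)^2) = 2 * card I * (\<Sum>i\<in>I. (a i)^2) - 2 * (\<Sum>i\<in>I. a i)^2"
proof -
  have "(\<Sum>i\<in>I. \<Sum>l\<in>I. (a i - a l)^2) = (\<Sum>i\<in>I. \<Sum>l\<in>I. (a i)^2 + (a l)^2 - 2 * (a i * a l))"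
    by (simp add: power2_diff mult.assoc)
  also have "\<dots> = (\<Sum>i\<in>I. card I * (a i)^2 + (\<Sum>l\<in>I. (a l)^2) - 2 * a i * (\<Sum>l\<in>I. a l))"
  proof (rule sum.cong[OF refl])
    fix i assume "i \<in> I"
    have "(\<Sum>l\<in>I. (a i)^2 + (a l)^2 - 2 * (a i * a l)) = (\<Sum>l\<in>I. (a i)^2) + (\<Sum>l\<in>I. (a l)^2) - (\<Sum>l\<in>I. 2 * a i * a l)"
      by (simp only: sum_subtractf sum.distrib mult.assoc)
    also have "(\<Sum>l\<in>I. 2 * a i * a l) = 2 * a i * (\<Sum>l\<in>I. a l)"
      by (simp only: sum_distrib_left)
    finally show "(\<Sum>l\<in>I. (a i)^2 + (a l)^2 - 2 * (a i * a l)) = card I * (a i)^2 + (\<Sum>l\<in>I. (a l)^2) - 2 * a i * (\<Sum>l\<in>I. a l)"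
      by simp
  qed
  also have "\<dots> = card I * (\<Sum>i\<in>I. (a i)^2) + card I * (\<Sum>l\<in>I. (a l)^2) - 2 * (\<Sum>i\<in>I. a i) * (\<Sum>l\<in>I. a l)"
    by (simp add: sum_subtractf sum.distrib sum_distrib_left[symmetric] sum_distrib_right[symmetric])
  also have "\<dots> = 2 * card I * (\<Sum>i\<in>I. (a i)^2) - 2 * (\<Sum>i\<in>I. a i)^2"
    by (simp add: power2_eq_square)
  finally show ?thesis .
qed

lemma complex_var_ineq:
  fixes u :: "nat \<Rightarrow> complex"
  assumes "finite I" "j \<in> I" "k \<in> I"
  shows "(cmod (\<Sum>i\<in>I. u i))^2 + (cmod (u j - u k))^2 / 2 \<le> card I * (\<Sum>i\<in>I. (cmod (u i))^2)"
proof -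
  define F where "F i l = (cmod (u i - u l))^2" for i l
  have F: "F i l = (Re (u i) - Re (u l))^2 + (Im (u i) - Im (u l))^2" for i l
    unfolding F_def by (simp add: cmod_power2)
  have "(\<Sum>i\<in>I. \<Sum>l\<in>I. F i l) = (\<Sum>i\<in>I. \<Sum>l\<in>I. (Re (u i) - Re (u l))^2) + (\<Sum>i\<in>I. \<Sum>l\<in>I. (Im (u i) - Im (u l))^2)"
    by (simp add: F sum.distrib)
  also have "\<dots> = 2 * card I * (\<Sum>i\<in>I. (cmod (u i))^2) - 2 * (cmod (\<Sum>i\<in>I. u i))^2"
    using real_var_identity[OF assms(1), of "\<lambda>i. Re (u i)"] real_var_identity[OF assms(1), of "\<lambda>i. Im (u i)"]
    by (simp add: cmod_power2 Re_sum Im_sum sum.distrib algebra_simps)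
  finally have eq: "(\<Sum>i\<in>I. \<Sum>l\<in>I. F i l) = 2 * card I * (\<Sum>i\<in>I. (cmod (u i))^2) - 2 * (cmod (\<Sum>i\<in>I. u i))^2" .
  have "F j k \<le> (\<Sum>l\<in>I. F j l)"
    by (rule member_le_sum) (auto simp: F_def assms)
  also have "\<dots> \<le> (\<Sum>i\<in>I. \<Sum>l\<in>I. F i l)"
    by (rule member_le_sum[where f="\<lambda>i. \<Sum>l\<in>I. F i l"]) (auto simp: F_def assms intro: sum_nonneg)
  finally show ?thesis using eq unfolding F_def by simp
qed



definition SS :: "nat \<Rightarrow> (nat \<Rightarrow> real) \<Rightarrow> complex \<Rightarrow> complex" where
  "SS n xs z = (\<Sum>j<n. 1 / (z - complex_of_real (xs j)))"
definition TT :: "nat \<Rightarrow> (nat \<Rightarrow> real) \<Rightarrow> complex \<Rightarrow> complex" where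
  "TT n xs z = (\<Sum>j<n. 1 / (z - complex_of_real (xs j))^2)"
definition q0 :: "nat \<Rightarrow> (nat \<Rightarrow> real) \<Rightarrow> complex \<Rightarrow> complex" where
  "q0 n xs z = z - of_nat n / SS n xs z"
definition dq0 :: "nat \<Rightarrow> (nat \<Rightarrow> real) \<Rightarrow> complex \<Rightarrow> complex" where
  "dq0 n xs z = 1 - of_nat n * TT n xs z / (SS n xs z)^2"

lemma not_real_ne: "Im z \<noteq> 0 \<Longrightarrow> z \<noteq> complex_of_real r"
  by auto

lemma cauchy_q_eq:
  assumes "Im z \<noteq> 0"
  shows "cauchy_q n xs z = q0 n xs z"
proof -
  have ne: "\<forall>j\<in>{..<n}. z \<noteq> complex_of_real (xs j)" using assms by auto
  have "(cauchy_h n xs has_field_derivative cauchy_h n xs z * SS n xs z) (at z)"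
    unfolding cauchy_h_def[abs_def] SS_def using prod_deriv_aux[OF _ ne] by simp
  then have d: "deriv (cauchy_h n xs) z = cauchy_h n xs z * SS n xs z"
    by (rule DERIV_imp_deriv)
  have h: "cauchy_h n xs z \<noteq> 0"
    unfolding cauchy_h_def using ne by (auto simp: prod_zero_iff)
  show ?thesis unfolding cauchy_q_def q0_def d using h by simp
qed

lemma SS_cnj: "SS n xs (cnj z) = cnj (SS n xs z)"
  unfolding SS_def by (simp add: cnj_sum)
lemma TT_cnj: "TT n xs (cnj z) = cnj (TT n xs z)"
  unfolding TT_def by (simp add: cnj_sum)
lemma q0_cnj: "q0 n xs (cnj z) = cnj (q0 n xs z)"
  unfolding q0_def by (simp add: SS_cnj)
lemma dq0_cnj: "dq0 n xs (cnj z) = cnj (dq0 n xs z)"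
  unfolding dq0_def by (simp add: SS_cnj TT_cnj)

lemma Im_inv_sub:
  fixes r :: real
  assumes "Im z \<noteq> 0"
  shows "Im (1 / (z - complex_of_real r)) = - Im z * (cmod (1 / (z - complex_of_real r)))^2"
proof -
  have ne: "z - complex_of_real r \<noteq> 0" using assms by auto
  show ?thesis using ne
    by (simp add: Im_divide norm_divide power_divide cmod_power2 field_simps)
qed

context
  fixes n :: nat and xs :: "nat \<Rightarrow> real"
  assumes n3: "n \<ge> 3" and inj: "inj_on xs {..<n}"
begin

lemma SS_upper:
  assumes "Im z > 0"
  shows "Im (SS n xs z) < 0" and "Im (q0 n xs z) < 0"
proof -
  define w where "w j = 1 / (z - complex_of_real (xs j))" for j
  define P where "P = (\<Sum>j<n. (cmod (w j))^2)"
  have Imw: "Im (w j) = - Im z * (cmod (w j))^2" for j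
    unfolding w_def using Im_inv_sub assms by auto
  have S: "SS n xs z = (\<Sum>j<n. w j)" unfolding SS_def w_def by simp
  have ImS: "Im (SS n xs z) = - Im z * P"
    unfolding S P_def by (simp add: Im_sum Imw sum_distrib_left)
  have x01: "xs 0 \<noteq> xs 1" using inj n3 unfolding inj_on_def by force
  have w01: "w 0 \<noteq> w 1" unfolding w_def using x01 assms by auto
  have w0: "w 0 \<noteq> 0" unfolding w_def using assms by auto
  have "(cmod (w 0))^2 \<le> P" unfolding P_def
    by (rule member_le_sum) (use n3 in auto)
  then have Ppos: "P > 0" using w0 by (smt (verit) zero_less_power2 norm_eq_zero)
  show ImSneg: "Im (SS n xs z) < 0" using ImS Ppos assms by simp
  have vi: "(cmod (\<Sum>i<n. w i))^2 + (cmod (w 0 - w 1))^2 / 2 \<le> card {..<n} * P"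
    unfolding P_def by (rule complex_var_ineq) (use n3 in auto)
  have pos: "(cmod (w 0 - w 1))^2 > 0" using w01 by simp
  have lt: "(cmod (SS n xs z))^2 < n * P" using vi pos unfolding S card_lessThan by linarith
  have Sne: "SS n xs z \<noteq> 0" using ImSneg by auto
  have Sn: "(cmod (SS n xs z))^2 > 0" using Sne by simp
  have "Im (of_nat n / SS n xs z) = n * Im z * P / (cmod (SS n xs z))^2"
    using ImS by (simp add: Im_divide cmod_power2)
  also have "\<dots> > Im z"
    using lt Sn assms Ppos by (simp add: field_simps)
  finally show "Im (q0 n xs z) < 0" unfolding q0_def by simp
qed

lemma SS_ne0: "Im z \<noteq> 0 \<Longrightarrow> SS n xs z \<noteq> 0"
proof -
  assume "Im z \<noteq> 0"
  then consider "Im z > 0" | "Im (cnj z) > 0" by (cases "Im z > 0") auto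
  then show ?thesis
  proof cases
    case 1 then show ?thesis using SS_upper(1) by force
  next
    case 2 then have "Im (SS n xs (cnj z)) < 0" by (rule SS_upper(1))
    then show ?thesis by (auto simp: SS_cnj)
  qed
qed

lemma q0_lower: "Im z < 0 \<Longrightarrow> Im (q0 n xs z) > 0"
proof -
  assume "Im z < 0"
  then have "Im (q0 n xs (cnj z)) < 0" by (intro SS_upper(2)) simp
  then show ?thesis by (simp add: q0_cnj)
qed

lemma q0_deriv:
  assumes "Im z \<noteq> 0"
  shows "(q0 n xs has_field_derivative dq0 n xs z) (at z)"
proof -
  have ne: "\<And>j. z - complex_of_real (xs j) \<noteq> 0" using assms by auto
  have dS: "(SS n xs has_field_derivative - TT n xs z) (at z)"
    unfolding SS_def[abs_def] TT_def
    using ne by (auto intro!: derivative_eq_intros simp: sum_negf[symmetric] power2_eq_square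
        simp del: sum_negf)
  have "(q0 n xs has_field_derivative 1 - (0 * SS n xs z - of_nat n * (- TT n xs z)) / (SS n xs z * SS n xs z)) (at z)"
    unfolding q0_def[abs_def]
    by (intro derivative_intros dS SS_ne0 assms)
  then show ?thesis unfolding dq0_def by (simp add: power2_eq_square)
qed

end


definition ell :: "nat \<Rightarrow> (nat \<Rightarrow> real) \<Rightarrow> real \<Rightarrow> real \<Rightarrow> real" where
  "ell n xs t s = (\<Sum>j<n. ln s - ln ((xs j - t)^2 + s^2))"

lemma lik_ln:
  assumes "Im th > 0"
  shows "cauchy_lik n xs th > 0" "ln (cauchy_lik n xs th) = ell n xs (Re th) (Im th) - n * ln pi"
proof -
  have pos: "Im th / (pi * ((xs j - Re th)^2 + (Im th)^2)) > 0" for j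
    using assms by (intro divide_pos_pos mult_pos_pos) (auto intro: add_nonneg_pos)
  show "cauchy_lik n xs th > 0" unfolding cauchy_lik_def using pos by (auto intro: prod_pos)
  have "ln (cauchy_lik n xs th) = (\<Sum>j<n. ln (Im th / (pi * ((xs j - Re th)^2 + (Im th)^2))))"
    unfolding cauchy_lik_def using pos by (subst ln_prod) auto
  also have "\<dots> = (\<Sum>j<n. (ln (Im th) - ln ((xs j - Re th)^2 + (Im th)^2)) - ln pi)"
  proof (rule sum.cong[OF refl])
    fix j
    have D: "(xs j - Re th)^2 + (Im th)^2 > 0" using assms by (auto intro: add_nonneg_pos)
    show "ln (Im th / (pi * ((xs j - Re th)^2 + (Im th)^2))) = (ln (Im th) - ln ((xs j - Re th)^2 + (Im th)^2)) - ln pi"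
      using D assms by (simp add: ln_div ln_mult)
  qed
  also have "\<dots> = ell n xs (Re th) (Im th) - n * ln pi"
    unfolding ell_def by (simp add: sum_subtractf)
  finally show "ln (cauchy_lik n xs th) = ell n xs (Re th) (Im th) - n * ln pi" .
qed

lemma mle_stationary:
  assumes a: "Im a > 0" and mx: "\<forall>th\<in>upper_half. cauchy_lik n xs th \<le> cauchy_lik n xs a"
  shows "SS n xs a = of_nat n / (a - cnj a)"
proof -
  define \<sigma> where "\<sigma> = Im a"
  define \<mu> where "\<mu> = Re a"
  have sp: "\<sigma> > 0" using a \<sigma>_def by simp
  define D where "D j = (xs j - \<mu>)^2 + \<sigma>^2" for j
  have Dp: "D j > 0" for j unfolding D_def using sp by (auto intro: add_nonneg_pos)
  have ellle: "ell n xs t s \<le> ell n xs \<mu> \<sigma>" if "s > 0" for t s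
  proof -
    have "Complex t s \<in> upper_half" using that by (simp add: upper_half_def)
    then have le: "cauchy_lik n xs (Complex t s) \<le> cauchy_lik n xs a" using mx by blast
    have "ln (cauchy_lik n xs (Complex t s)) \<le> ln (cauchy_lik n xs a)"
    proof -
      have p1: "cauchy_lik n xs (Complex t s) > 0" by (rule lik_ln(1)) (simp add: that)
      show ?thesis using le p1 by simp
    qed
    moreover have "ln (cauchy_lik n xs (Complex t s)) = ell n xs t s - n * ln pi"
      using lik_ln(2)[where th="Complex t s"] that by simp
    moreover have "ln (cauchy_lik n xs a) = ell n xs \<mu> \<sigma> - n * ln pi"
      using lik_ln(2)[where th=a] a by (simp add: \<sigma>_def \<mu>_def)
    ultimately show ?thesis
      by (simp add: \<sigma>_def \<mu>_def)
  qed
  have d1: "DERIV (\<lambda>t. ell n xs t \<sigma>) \<mu> :> (\<Sum>j<n. 2 * (xs j - \<mu>) / D j)"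
    unfolding ell_def[abs_def]
    using Dp sp by (auto intro!: derivative_eq_intros sum.cong simp: D_def power2_eq_square minus_divide_left algebra_simps)
  have z1: "(\<Sum>j<n. 2 * (xs j - \<mu>) / D j) = 0"
    by (rule DERIV_local_max[OF d1, of 1]) (use ellle sp in auto)
  have d2: "DERIV (\<lambda>s. ell n xs \<mu> s) \<sigma> :> (\<Sum>j<n. 1 / \<sigma> - 2 * \<sigma> / D j)"
    unfolding ell_def[abs_def]
    using Dp sp by (auto intro!: derivative_eq_intros sum.cong simp: D_def field_simps power2_eq_square)
  have z2: "(\<Sum>j<n. 1 / \<sigma> - 2 * \<sigma> / D j) = 0"
    by (rule DERIV_local_max[OF d2, of \<sigma>]) (use ellle sp in auto)
  have sumD: "(\<Sum>j<n. 1 / D j) = n / (2 * \<sigma>^2)"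
  proof -
    have "n / \<sigma> - 2 * \<sigma> * (\<Sum>j<n. 1 / D j) = 0"
      using z2 by (simp add: sum_subtractf sum_distrib_left)
    then show ?thesis using sp by (simp add: field_simps power2_eq_square)
  qed
  have inv: "1 / (a - complex_of_real (xs j)) = Complex ((\<mu> - xs j) / D j) (- \<sigma> / D j)" for j
  proof -
    have "a - complex_of_real (xs j) = Complex (\<mu> - xs j) \<sigma>" by (simp add: complex_eq_iff \<mu>_def \<sigma>_def)
    then show ?thesis using Dp[of j] by (simp add: complex_eq_iff D_def Re_divide Im_divide power2_commute)
  qed
  have ReS: "Re (SS n xs a) = 0"
  proof -
    have "Re (SS n xs a) = (\<Sum>j<n. (\<mu> - xs j) / D j)" unfolding SS_def by (simp add: Re_sum inv)
    also have "\<dots> = - (1/2) * (\<Sum>j<n. 2 * (xs j - \<mu>) / D j)"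
      unfolding sum_distrib_left by (rule sum.cong[OF refl]) (simp, argo)
    finally show ?thesis using z1 by simp
  qed
  have ImS: "Im (SS n xs a) = - n / (2 * \<sigma>)"
  proof -
    have "Im (SS n xs a) = - \<sigma> * (\<Sum>j<n. 1 / D j)" unfolding SS_def
      by (simp add: Im_sum inv sum_distrib_left sum_negf[symmetric] del: sum_negf)
    then show ?thesis using sumD sp by (simp add: power2_eq_square)
  qed
  have "a - cnj a = Complex 0 (2 * \<sigma>)" by (simp add: complex_eq_iff \<sigma>_def)
  then show ?thesis using ReS ImS sp by (simp add: complex_eq_iff Re_divide Im_divide power2_eq_square)
qed



context
  fixes n :: nat and xs :: "nat \<Rightarrow> real"
  assumes n3: "n \<ge> 3" and inj: "inj_on xs {..<n}"
begin

lemma at_mle: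
  assumes a: "Im a > 0" and S: "SS n xs a = of_nat n / (a - cnj a)"
  shows "q0 n xs a = cnj a" "q0 n xs (cnj a) = a" "cmod (dq0 n xs a) < 1" "cmod (dq0 n xs (cnj a)) < 1"
proof -
  define k where "k = a - cnj a"
  have k0: "k \<noteq> 0" unfolding k_def using a by (auto simp: complex_eq_iff)
  have n0: "(of_nat n :: complex) \<noteq> 0" using n3 by simp
  show q: "q0 n xs a = cnj a" unfolding q0_def S using n0 k0 by (simp add: k_def[symmetric]) (simp add: k_def)
  show "q0 n xs (cnj a) = a" using q q0_cnj[of n xs a] by simp
  define w where "w j = 1 / (a - complex_of_real (xs j))" for j
  define y where "y j = 1 - k * w j" for j
  have ne: "a - complex_of_real (xs j) \<noteq> 0" for j using a by auto
  have yabs: "cmod (y j) = 1" for j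
  proof -
    have "y j = (cnj a - complex_of_real (xs j)) / (a - complex_of_real (xs j))"
      unfolding y_def w_def k_def using ne[of j] by (simp add: field_simps)
    moreover have "cmod (cnj a - complex_of_real (xs j)) = cmod (a - complex_of_real (xs j))"
      by (metis complex_cnj_complex_of_real complex_cnj_diff complex_mod_cnj)
    ultimately show ?thesis using ne[of j] by (simp add: norm_divide)
  qed
  have Sw: "SS n xs a = (\<Sum>j<n. w j)" unfolding SS_def w_def by simp
  have Tw: "TT n xs a = (\<Sum>j<n. (w j)^2)" unfolding TT_def w_def by (simp add: power_divide)
  have sumy: "(\<Sum>j<n. y j) = 0"
  proof -
    have "(\<Sum>j<n. y j) = of_nat n - k * SS n xs a" unfolding y_def Sw by (simp add: sum_subtractf sum_distrib_left)
    also have "\<dots> = 0" unfolding S k_def[symmetric] using k0 by simp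
    finally show ?thesis .
  qed
  have dq: "dq0 n xs a = - (\<Sum>j<n. (y j)^2) / of_nat n"
  proof -
    have "dq0 n xs a = 1 - TT n xs a * k^2 / of_nat n"
      unfolding dq0_def S k_def[symmetric] using n0 k0 by (simp add: power_divide field_simps power2_eq_square)
    also have "\<dots> = (\<Sum>j<n. 1 - k^2 * (w j)^2) / of_nat n"
      unfolding Tw using n0 by (simp add: sum_subtractf sum_distrib_left field_simps)
    also have "(\<Sum>j<n. 1 - k^2 * (w j)^2) = (\<Sum>j<n. 2 * y j - (y j)^2)"
      by (rule sum.cong[OF refl]) (simp add: y_def power2_eq_square algebra_simps)
    also have "\<dots> = 2 * (\<Sum>j<n. y j) - (\<Sum>j<n. (y j)^2)"
      by (simp add: sum_subtractf sum_distrib_left)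
    finally show ?thesis using sumy by simp
  qed
  have yinj: "y i \<noteq> y j" if "i < n" "j < n" "i \<noteq> j" for i j
  proof
    assume "y i = y j"
    then have "w i = w j" unfolding y_def using k0 by simp
    then have "xs i = xs j" unfolding w_def using ne[of i] ne[of j] by (simp add: field_simps)
    then show False using inj that unfolding inj_on_def by auto
  qed
  obtain j where j: "j < n" "(y 0)^2 \<noteq> (y j)^2"
  proof (cases "(y 0)^2 = (y 1)^2")
    case True
    have "(y 0)^2 \<noteq> (y 2)^2"
    proof
      assume "(y 0)^2 = (y 2)^2"
      have "y 1 = - y 0" using True yinj[of 1 0] n3 by (auto simp: power2_eq_iff)
      moreover have "y 2 = - y 0" using \<open>(y 0)^2 = (y 2)^2\<close> yinj[of 2 0] n3 by (auto simp: power2_eq_iff)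
      ultimately show False using yinj[of 1 2] n3 by auto
    qed
    then show ?thesis using that[of 2] n3 by auto
  next
    case False
    then show ?thesis using that[of 1] n3 by auto
  qed
  have vi: "(cmod (\<Sum>i<n. (y i)^2))^2 + (cmod ((y 0)^2 - (y j)^2))^2 / 2 \<le> card {..<n} * (\<Sum>i<n. (cmod ((y i)^2))^2)"
    by (rule complex_var_ineq) (use j n3 in auto)
  have pos: "(cmod ((y 0)^2 - (y j)^2))^2 > 0" using j by simp
  have "(cmod (\<Sum>i<n. (y i)^2))^2 < (real n)^2"
  proof -
    have s1: "(\<Sum>i<n. (cmod ((y i)^2))^2) = real n" by (simp add: norm_power yabs)
    show ?thesis using vi pos unfolding s1 card_lessThan by (simp add: power2_eq_square)
  qed
  then have "cmod (\<Sum>i<n. (y i)^2) < real n"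
    using power2_less_imp_less by (metis of_nat_0_le_iff)
  then show "cmod (dq0 n xs a) < 1" unfolding dq using n3 by (simp add: norm_divide)
  then show "cmod (dq0 n xs (cnj a)) < 1" by (simp add: dq0_cnj)
qed

end


lemma psi_Im:
  fixes a w :: complex
  assumes "Im a > 0" "cmod w < 1"
  shows "Im ((a - cnj a * w) / (1 - w)) > 0"
proof -
  have w1: "1 - w \<noteq> 0" using assms(2) by auto
  have "Im ((a - cnj a * w) / (1 - w)) = Im a * (1 - (cmod w)^2) / (cmod (1 - w))^2"
    using w1 unfolding Im_divide cmod_power2 by (simp add: algebra_simps power2_eq_square)
  moreover have "(cmod w)^2 < 1" using assms(2) by (simp add: power_less_one_iff)
  ultimately show ?thesis using assms w1 by simp
qed

lemma phi_in:
  fixes a z :: complex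
  assumes "Im a > 0" "Im z > 0"
  shows "cmod ((z - a) / (z - cnj a)) < 1"
proof -
  have ne: "z - cnj a \<noteq> 0" using assms by (auto simp: complex_eq_iff)
  have "(cmod (z - a))^2 < (cmod (z - cnj a))^2"
    using assms unfolding cmod_power2 by (simp add: power2_eq_square algebra_simps)
  then have "cmod (z - a) < cmod (z - cnj a)" using power2_less_imp_less by fastforce
  then show ?thesis using ne by (simp add: norm_divide)
qed



context
  fixes n :: nat and xs :: "nat \<Rightarrow> real"
  assumes n3: "n \<ge> 3" and inj: "inj_on xs {..<n}"
begin

lemma QQ:
  assumes "Im z > 0"
  shows "cauchy_Q n xs z = q0 n xs (q0 n xs z)" "Im (q0 n xs (q0 n xs z)) > 0"
proof -
  have l: "Im (q0 n xs z) < 0" using SS_upper(2)[OF n3 inj assms] .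
  show "cauchy_Q n xs z = q0 n xs (q0 n xs z)"
    unfolding cauchy_Q_def using cauchy_q_eq[of z n xs] cauchy_q_eq[of "q0 n xs z" n xs] assms l by simp
  show "Im (q0 n xs (q0 n xs z)) > 0" using q0_lower[OF n3 inj l] .
qed

lemma Q0_deriv:
  assumes "Im z > 0"
  shows "((\<lambda>z. q0 n xs (q0 n xs z)) has_field_derivative dq0 n xs (q0 n xs z) * dq0 n xs z) (at z)"
proof -
  have l: "Im (q0 n xs z) < 0" using SS_upper(2)[OF n3 inj assms] .
  show ?thesis
    by (rule DERIV_chain2[OF q0_deriv[OF n3 inj] q0_deriv[OF n3 inj]]) (use l assms in auto)
qed

lemma main_dyn:
  assumes a: "Im a > 0" and S: "SS n xs a = of_nat n / (a - cnj a)"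
  shows "cauchy_Q n xs a = a"
    and "\<And>z. Im z > 0 \<Longrightarrow> \<exists>C>0. \<exists>r. 0 < r \<and> r < 1 \<and>
              (\<forall>m. cmod ((cauchy_Q n xs ^^ m) z - a) \<le> C * r ^ m)"
proof -
  note M = at_mle[OF n3 inj a S]
  define Q0 where "Q0 z = q0 n xs (q0 n xs z)" for z
  define b where "b = cnj a"
  define k where "k = a - b"
  define \<phi> where "\<phi> z = (z - a) / (z - b)" for z
  define \<psi> where "\<psi> w = (a - b * w) / (1 - w)" for w
  define f where "f w = \<phi> (Q0 (\<psi> w))" for w
  have k0: "k \<noteq> 0" unfolding k_def b_def using a by (auto simp: complex_eq_iff)
  have Qa: "Q0 a = a" unfolding Q0_def using M by simp
  show "cauchy_Q n xs a = a" using QQ(1)[OF a] Qa by (simp add: Q0_def)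
  have QH: "Im z > 0 \<Longrightarrow> Im (Q0 z) > 0" for z unfolding Q0_def by (rule QQ(2))
  have Qeq: "Im z > 0 \<Longrightarrow> cauchy_Q n xs z = Q0 z" for z unfolding Q0_def by (rule QQ(1))
  have \<psi>H: "cmod w < 1 \<Longrightarrow> Im (\<psi> w) > 0" for w unfolding \<psi>_def b_def by (rule psi_Im[OF a])
  have \<phi>D: "Im z > 0 \<Longrightarrow> cmod (\<phi> z) < 1" for z unfolding \<phi>_def b_def by (rule phi_in[OF a])
  have bne: "Im z > 0 \<Longrightarrow> z - b \<noteq> 0" for z unfolding b_def using a by (auto simp: complex_eq_iff)
  have \<psi>\<phi>: "Im z > 0 \<Longrightarrow> \<psi> (\<phi> z) = z" for z
  proof -
    assume z: "Im z > 0"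
    have ne: "z - b \<noteq> 0" using bne[OF z] .
    have "1 - (z - a) / (z - b) = k / (z - b)" using ne by (simp add: field_simps k_def)
    moreover have "a - b * ((z - a) / (z - b)) = k * z / (z - b)" using ne by (simp add: field_simps k_def)
    ultimately show "\<psi> (\<phi> z) = z" unfolding \<psi>_def \<phi>_def using ne k0 by simp
  qed
  have \<psi>a: "\<psi> w - a = w * k / (1 - w)" if "cmod w < 1" for w
  proof -
    have "1 - w \<noteq> 0" using that by auto
    then show ?thesis unfolding \<psi>_def k_def by (simp add: field_simps)
  qed
  have \<psi>b: "\<psi> w - b = k / (1 - w)" if "cmod w < 1" for w
  proof -
    have "1 - w \<noteq> 0" using that by auto
    then show ?thesis unfolding \<psi>_def k_def by (simp add: field_simps)
  qed
  have \<phi>\<psi>: "\<phi> (\<psi> w) = w" if "cmod w < 1" for w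
  proof -
    have "1 - w \<noteq> 0" using that by auto
    then show ?thesis unfolding \<phi>_def using \<psi>a[OF that] \<psi>b[OF that] k0 by simp
  qed
  have \<psi>0: "\<psi> 0 = a" unfolding \<psi>_def by simp
  have f0: "f 0 = 0" unfolding f_def \<psi>0 Qa \<phi>_def by simp
  have fD: "cmod w < 1 \<Longrightarrow> cmod (f w) < 1" for w unfolding f_def using \<phi>D QH \<psi>H by blast
  have d\<psi>: "(\<psi> has_field_derivative k / (1 - w)^2) (at w)" if "cmod w < 1" for w
  proof -
    have "1 - w \<noteq> 0" using that by auto
    then show ?thesis unfolding \<psi>_def[abs_def] k_def
      by (auto intro!: derivative_eq_intros simp: field_simps power2_eq_square)
  qed
  have d\<phi>: "(\<phi> has_field_derivative k / (z - b)^2) (at z)" if "Im z > 0" for z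
  proof -
    have "z - b \<noteq> 0" using bne[OF that] .
    then show ?thesis unfolding \<phi>_def[abs_def] k_def
      by (auto intro!: derivative_eq_intros simp: field_simps power2_eq_square)
  qed
  define dQ where "dQ z = dq0 n xs (q0 n xs z) * dq0 n xs z" for z
  have dQ0: "(Q0 has_field_derivative dQ z) (at z)" if "Im z > 0" for z
    unfolding Q0_def[abs_def] dQ_def using Q0_deriv[OF that] .
  have df: "(f has_field_derivative (k / (Q0 (\<psi> w) - b)^2) * dQ (\<psi> w) * (k / (1 - w)^2)) (at w)"
    if "cmod w < 1" for w
  proof -
    have "((\<lambda>w. Q0 (\<psi> w)) has_field_derivative dQ (\<psi> w) * (k / (1 - w)^2)) (at w)"
      by (rule DERIV_chain2[where f=Q0 and g=\<psi>, OF dQ0[OF \<psi>H[OF that]] d\<psi>[OF that]])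
    then have "((\<lambda>w. \<phi> (Q0 (\<psi> w))) has_field_derivative (k / (Q0 (\<psi> w) - b)^2) * (dQ (\<psi> w) * (k / (1 - w)^2))) (at w)"
      by (rule DERIV_chain2[where f=\<phi> and g="\<lambda>w. Q0 (\<psi> w)", OF d\<phi>[OF QH[OF \<psi>H[OF that]]]])
    then show ?thesis unfolding f_def[abs_def] by (simp add: mult.assoc)
  qed
  define f' where "f' = dQ a"
  have df0: "(f has_field_derivative f') (at 0)"
  proof -
    have "(k / (Q0 (\<psi> 0) - b)^2) * dQ (\<psi> 0) * (k / (1 - 0)^2) = f'"
      unfolding \<psi>0 Qa f'_def k_def[symmetric] using k0 by (simp add: power2_eq_square)
    then show ?thesis using df[of 0] by simp
  qed
  have f'lt: "cmod f' < 1"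
  proof -
    have "cmod f' = cmod (dq0 n xs (cnj a)) * cmod (dq0 n xs a)"
      unfolding f'_def dQ_def M(1) by (simp add: norm_mult)
    also have "\<dots> < 1" using M(3,4)
      by (metis mult_le_one norm_ge_zero less_imp_le mult_less_cancel_left1 order_le_less_trans mult_left_le_one_le le_less_trans)
    finally show ?thesis .
  qed
  have holf: "f holomorphic_on ball 0 1"
    unfolding holomorphic_on_open[OF open_ball]
  proof
    fix w :: complex assume "w \<in> ball 0 1"
    then have "cmod w < 1" by simp
    then show "\<exists>f'. (f has_field_derivative f') (at w)" using df by blast
  qed
  have strict: "cmod (f w) < cmod w" if w: "cmod w < 1" "w \<noteq> 0" for w
  proof -
    have le: "cmod (f w) \<le> cmod w" by (rule Schwarz_Lemma(1)[OF holf f0 fD w(1)])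
    show ?thesis
    proof (rule ccontr)
      assume "\<not> cmod (f w) < cmod w"
      then have "cmod (f w) = cmod w" using le by simp
      then obtain \<alpha> where al: "\<forall>z. cmod z < 1 \<longrightarrow> f z = \<alpha> * z" "cmod \<alpha> = 1"
        using Schwarz_Lemma(3)[OF holf f0 fD w(1)] w by blast
      have "((\<lambda>z. \<alpha> * z) has_field_derivative \<alpha>) (at 0)" by (auto intro!: derivative_eq_intros)
      then have "(f has_field_derivative \<alpha>) (at 0)"
        by (rule has_field_derivative_transform_within_open[where S="ball 0 1"]) (use al in auto)
      then have "\<alpha> = f'" using df0 DERIV_unique by blast
      then show False using al(2) f'lt by simp
    qed
  qed
  define h where "h z = (if z = 0 then deriv f 0 else (f z - f 0) / (z - 0))" for z
  have holh: "h holomorphic_on ball 0 1" unfolding h_def[abs_def] by (rule pole_lemma[OF holf]) auto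
  have dfe: "deriv f 0 = f'" using df0 by (rule DERIV_imp_deriv)
  have hlt: "cmod (h w) < 1" if "cmod w < 1" for w
  proof (cases "w = 0")
    case True then show ?thesis unfolding h_def dfe using f'lt by simp
  next
    case False then show ?thesis unfolding h_def f0 using strict[OF that False] by (simp add: norm_divide)
  qed
  have fh: "cmod (f w) = cmod (h w) * cmod w" if "cmod w < 1" for w
    unfolding h_def f0 by (cases "w = 0") (auto simp: f0 norm_divide)
  fix z :: complex
  assume z: "Im z > 0"
  define w0 where "w0 = \<phi> z"
  define \<rho> where "\<rho> = cmod w0"
  have \<rho>1: "\<rho> < 1" unfolding \<rho>_def w0_def using \<phi>D[OF z] .
  have \<rho>0: "\<rho> \<ge> 0" unfolding \<rho>_def by simp
  have sub: "cball 0 \<rho> \<subseteq> ball (0::complex) 1" using \<rho>1 by auto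
  have conth: "continuous_on (cball 0 \<rho>) (\<lambda>w. cmod (h w))"
    by (intro continuous_intros holomorphic_on_imp_continuous_on holomorphic_on_subset[OF holh sub])
  obtain ws where ws: "ws \<in> cball 0 \<rho>" "\<forall>y\<in>cball 0 \<rho>. cmod (h y) \<le> cmod (h ws)"
    using continuous_attains_sup[OF compact_cball _ conth] \<rho>0 by auto
  define c where "c = cmod (h ws)"
  have c1: "c < 1" unfolding c_def using hlt ws(1) sub by auto
  have c0: "c \<ge> 0" unfolding c_def by simp
  have fc: "cmod (f w) \<le> c * cmod w" if "cmod w \<le> \<rho>" for w
  proof -
    have "cmod w < 1" using that \<rho>1 by simp
    then have "cmod (f w) = cmod (h w) * cmod w" by (rule fh)
    also have "\<dots> \<le> c * cmod w" unfolding c_def using ws(2) that by (intro mult_right_mono) auto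
    finally show ?thesis .
  qed
  define W where "W m = (f ^^ m) w0" for m
  have ind: "cmod (W m) \<le> c ^ m * \<rho> \<and> (cauchy_Q n xs ^^ m) z = \<psi> (W m)" for m
  proof (induction m)
    case 0
    then show ?case unfolding W_def \<rho>_def w0_def using \<psi>\<phi>[OF z] by simp
  next
    case (Suc m)
    have cm: "c ^ m \<le> 1" using c0 c1 by (simp add: power_le_one)
    have "c ^ m * \<rho> \<le> \<rho>" using cm \<rho>0 c0 by (simp add: mult_left_le_one_le)
    then have Wr: "cmod (W m) \<le> \<rho>" using Suc.IH by linarith
    have W1: "cmod (W m) < 1" using Wr \<rho>1 by simp
    have WS: "W (Suc m) = f (W m)" unfolding W_def by simp
    have "cmod (W (Suc m)) \<le> c * cmod (W m)" unfolding WS by (rule fc[OF Wr])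
    also have "\<dots> \<le> c * (c ^ m * \<rho>)" using Suc.IH c0 by (intro mult_left_mono) auto
    finally have A: "cmod (W (Suc m)) \<le> c ^ Suc m * \<rho>" by simp
    have "(cauchy_Q n xs ^^ Suc m) z = cauchy_Q n xs (\<psi> (W m))" using Suc.IH by simp
    also have "\<dots> = Q0 (\<psi> (W m))" using Qeq \<psi>H[OF W1] by simp
    also have "\<dots> = \<psi> (\<phi> (Q0 (\<psi> (W m))))" using \<psi>\<phi> QH \<psi>H[OF W1] by simp
    also have "\<dots> = \<psi> (W (Suc m))" unfolding WS f_def ..
    finally show ?case using A by simp
  qed
  have kn: "cmod k = 2 * Im a"
  proof -
    have "k = complex_of_real (2 * Im a) * \<i>" unfolding k_def b_def by (simp add: complex_eq_iff)
    then show ?thesis using a by (simp add: norm_mult)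
  qed
  have bound: "cmod ((cauchy_Q n xs ^^ m) z - a) \<le> (2 * Im a * \<rho> / (1 - \<rho>)) * c ^ m" for m
  proof -
    have cm: "c ^ m \<le> 1" using c0 c1 by (simp add: power_le_one)
    have "c ^ m * \<rho> \<le> \<rho>" using cm \<rho>0 c0 by (simp add: mult_left_le_one_le)
    then have Wr: "cmod (W m) \<le> \<rho>" using ind[of m] by linarith
    have W1: "cmod (W m) < 1" using Wr \<rho>1 by simp
    have d: "cmod (1 - W m) \<ge> 1 - \<rho>" using Wr norm_triangle_ineq2[of 1 "W m"] by simp
    have "cmod ((cauchy_Q n xs ^^ m) z - a) = cmod (W m) * cmod k / cmod (1 - W m)"
      using ind[of m] \<psi>a[OF W1] by (simp add: norm_mult norm_divide)
    also have "\<dots> \<le> (c ^ m * \<rho>) * (2 * Im a) / (1 - \<rho>)"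
      unfolding kn using ind[of m] d \<rho>1 a \<rho>0 c0
      by (intro frac_le mult_right_mono) auto
    finally show ?thesis by (simp add: field_simps)
  qed
  define C where "C = 2 * Im a * \<rho> / (1 - \<rho>) + 1"
  define r where "r = max c (1/2)"
  have C0: "2 * Im a * \<rho> / (1 - \<rho>) \<ge> 0" using a \<rho>0 \<rho>1 by simp
  show "\<exists>C>0. \<exists>r. 0 < r \<and> r < 1 \<and> (\<forall>m. cmod ((cauchy_Q n xs ^^ m) z - a) \<le> C * r ^ m)"
  proof (intro exI conjI allI)
    show "C > 0" unfolding C_def using C0 by simp
    show "0 < r" "r < 1" unfolding r_def using c1 by auto
    fix m
    have "c ^ m \<le> r ^ m" unfolding r_def using c0 by (intro power_mono) auto
    then have "(2 * Im a * \<rho> / (1 - \<rho>)) * c ^ m \<le> C * r ^ m"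
      unfolding C_def using C0 c0 by (smt (verit) mult_mono zero_le_power mult_right_mono zero_le_one
          distrib_right mult_1 r_def)
    then show "cmod ((cauchy_Q n xs ^^ m) z - a) \<le> C * r ^ m" using bound[of m] by linarith
  qed
qed

end

theorem mainTheorem1:
  fixes n :: nat and xs :: "nat \<Rightarrow> real" and \<theta>hat :: complex
  assumes "n \<ge> 3"
    and "inj_on xs {..<n}"
    and "\<theta>hat \<in> upper_half"
    and "\<forall>\<theta>\<in>upper_half. cauchy_lik n xs \<theta> \<le> cauchy_lik n xs \<theta>hat"
  shows "{z \<in> upper_half. z = cauchy_Q n xs z} = {\<theta>hat}
         \<and> cauchy_Q n xs \<theta>hat = \<theta>hat
         \<and> (\<forall>z\<in>upper_half.
           (\<lambda>m. (cauchy_Q n xs ^^ m) z) \<longlonglongrightarrow> \<theta>hat \<and>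
           (\<exists>C>0. \<exists>r. 0 < r \<and> r < 1 \<and>
              (\<forall>m. cmod ((cauchy_Q n xs ^^ m) z - \<theta>hat) \<le> C * r ^ m)))"
proof -
  have a: "Im \<theta>hat > 0" using assms(3) by (simp add: upper_half_def)
  have S: "SS n xs \<theta>hat = of_nat n / (\<theta>hat - cnj \<theta>hat)"
    by (rule mle_stationary[OF a assms(4)])
  note D = main_dyn[OF assms(1,2) a S]
  have fx: "cauchy_Q n xs \<theta>hat = \<theta>hat" by (rule D(1))
  have conv: "(\<lambda>m. (cauchy_Q n xs ^^ m) z) \<longlonglongrightarrow> \<theta>hat \<and>
           (\<exists>C>0. \<exists>r. 0 < r \<and> r < 1 \<and>
              (\<forall>m. cmod ((cauchy_Q n xs ^^ m) z - \<theta>hat) \<le> C * r ^ m))" if z: "z \<in> upper_half" for z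
  proof -
    have zi: "Im z > 0" using z by (simp add: upper_half_def)
    obtain C r where Cr: "C > 0" "0 < r" "r < 1" "\<forall>m. cmod ((cauchy_Q n xs ^^ m) z - \<theta>hat) \<le> C * r ^ m"
      using D(2)[OF zi] by blast
    have "(\<lambda>m. C * r ^ m) \<longlonglongrightarrow> 0"
      by (rule tendsto_mult_right_zero) (rule LIMSEQ_power_zero, use Cr in simp)
    then have "(\<lambda>m. (cauchy_Q n xs ^^ m) z - \<theta>hat) \<longlonglongrightarrow> 0"
      by (rule Lim_null_comparison[rotated]) (use Cr(4) in auto)
    then have "(\<lambda>m. (cauchy_Q n xs ^^ m) z) \<longlonglongrightarrow> \<theta>hat" by (rule LIM_zero_cancel)
    then show ?thesis using Cr by blast
  qed
  have set: "{z \<in> upper_half. z = cauchy_Q n xs z} = {\<theta>hat}"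
  proof
    show "{\<theta>hat} \<subseteq> {z \<in> upper_half. z = cauchy_Q n xs z}" using assms(3) fx by simp
    show "{z \<in> upper_half. z = cauchy_Q n xs z} \<subseteq> {\<theta>hat}"
    proof
      fix z assume "z \<in> {z \<in> upper_half. z = cauchy_Q n xs z}"
      then have z: "z \<in> upper_half" "z = cauchy_Q n xs z" by auto
      have it: "(cauchy_Q n xs ^^ m) z = z" for m
        by (induction m) (use z(2) in auto)
      have "(\<lambda>m. (cauchy_Q n xs ^^ m) z) \<longlonglongrightarrow> \<theta>hat" using conv[OF z(1)] by blast
      then have "(\<lambda>m. z) \<longlonglongrightarrow> \<theta>hat" unfolding it .
      then have "z = \<theta>hat" using LIMSEQ_unique tendsto_const by blast
      then show "z \<in> {\<theta>hat}" by simp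
    qed
  qed
  show ?thesis using set fx conv by blast
qed

end
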